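(* Let $T$ be a fair transition path, $p\in\mathbb{P}$ a nonfaulty proposer, $Q\in\mathcal{Q}$ a quorum all of whose members are nonfaulty, and $b\in\mathcal{B}$ a proposal number satisfying P1 and P2. If at some index $i$ of $T$ the proposer $p$ has received promises ($1b$ messages) for $b$ from all members of $Q$, then there is an index $j$ such that in the configuration at index $j$ of $T$, $p$ has received votes ($2b$ messages) for $b$ from all members of $Q$.
   Context: Setting: the Synod consensus protocol modeled in a failure-aware actor model. An actor configuration is $\langle\alpha\,\|\,\bar\alpha\,\|\,\mu\rangle$ where $\alpha$ maps available actors to their states, $\bar\alpha$ maps failed actors to their states (states persist across failure), and $\mu$ is the multiset of messages en route. Transitions are base-level ($\mathbf{snd}$: an actor puts a message into $\mu$; $\mathbf{rcv}$: an actor removes a message addressed to it from $\mu$ and processes it; also $\mathbf{fun},\mathbf{new}$), which can only be taken by an available actor, and meta-level ($\mathbf{stp}$: an available actor becomes failed; $\mathbf{bgn}$: a failed actor becomes available). A transition path is a sequence of configurations indexed by natural numbers (logical time), each obtained from the previous by a transition; messages are never lost. Actors are partitioned into proposers $\mathbb{P}$ and acceptors $\mathbb{A}$; a quorum is a nonempty subset of $\mathbb{A}$. A message is a tuple $\langle s,r,k,b,v\rangle$ (sender, receiver, kind $k\in\{1a,1b,2a,2b\}$ = prepare, promise, accept, voted; proposal number $b$; value $v$). The local state of actor $x$ in configuration $\kappa$ consists of the set of received but not yet responded-to messages, the highest proposal number seen, and the value of the highest-numbered accepted proposal. Fair transition paths satisfy: if a $\mathbf{snd}$ or $\mathbf{rcv}$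 transition is enabled for an actor at some index, then either it occurs at some later index or from some later index on it is permanently disabled. Protocol rules: an available acceptor holding an unresponded $1a$ message with number $b$ greater than its highest seen number becomes ready to send a $1b$ (promise) to the sender carrying $b$ and its highest accepted proposal number and value; a proposer that has received $1b$ messages for $b$ from all members of a quorum $Q$ becomes ready to send $2a$ (accept) messages with $b$ and a value chosen from its configuration to all members of $Q$; an available acceptor holding an unresponded $2a$ message with number $b$ at least its highest seen number accepts it and becomes ready to send a $2b$ (voted) message with $b$ and the value to the sender; if a message addressed to an available actor is in $\mu$, a $\mathbf{rcv}$ of it is enabled. An actor $x$ is nonfaulty if: $x$ eventually becomes available whenever there is a message en route that $x$ must receive; $x$ eventually becomes available whenever its local state dictates it must send a message; and any enabled $\mathbf{snd}$ or $\mathbf{rcv}$ transition of $x$ either eventually occurs or is infinitely often enabled. A proposal number $b$ satisfies P1 and P2 if whenever an acceptor receives a prepare message with $b$, $b$ is greater than all proposal numbers that acceptor has previously seen, and whenever an acceptor receives an accept message with $b$, $b$ is greater than or equal to all proposal numbers it has previously seen. *)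

theory Defs
  imports Main "HOL-Library.Multiset"
begin

text \<open>Message kinds: 1a = prepare, 1b = promise, 2a = accept, 2b = voted.\<close>
datatype kind = K1a | K1b | K2a | K2b

text \<open>The value slot carries an optional numbered value: for a 1b message the
  highest-numbered accepted proposal (number and value) of the acceptor, for
  2a/2b messages the pair (b, v); for 1a messages it is None.\<close>
datatype ('a, 'v) msg =
  Msg (src: 'a) (dst: 'a) (knd: kind) (num: nat) (val: "(nat \<times> 'v) option")

text \<open>Local state of an actor:
  rcvd   -- messages received so far;
  out    -- responses the actor's processing has determined but not yet sent
            (i.e. the received-but-not-yet-responded-to messages, represented
             by their pending responses);
  hi     -- highest proposal number seen (None = none yet);
  acc    -- highest-numbered accepted proposal (number, value);
  sent2a -- pairs (acceptor, b) to which the proposer has already sent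
            its accept message for b.\<close>
record ('a, 'v) lstate =
  rcvd   :: "('a, 'v) msg set"
  out    :: "('a, 'v) msg set"
  hi     :: "nat option"
  acc    :: "(nat \<times> 'v) option"
  sent2a :: "('a \<times> nat) set"

definition empty_lstate :: "('a, 'v) lstate" where
  "empty_lstate = \<lparr>rcvd = {}, out = {}, hi = None, acc = None, sent2a = {}\<rparr>"

text \<open>A configuration: the set of available actors (the others are failed),
  the local states of all actors (states persist across failure), and the
  multiset of messages en route.\<close>
record ('a, 'v) config =
  avail :: "'a set"
  st    :: "'a \<Rightarrow> ('a, 'v) lstate"
  mu    :: "('a, 'v) msg multiset"

datatype ('a, 'v) label =
  Snd 'a "('a, 'v) msg" | Rcv 'a "('a, 'v) msg" | Stp 'a | Bgn 'a

definition quorum :: "'a set \<Rightarrow> 'a set \<Rightarrow> bool" where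
  "quorum Acc Q \<longleftrightarrow> Q \<noteq> {} \<and> Q \<subseteq> Acc"

definition gt_opt :: "nat \<Rightarrow> nat option \<Rightarrow> bool" where
  "gt_opt b h = (case h of None \<Rightarrow> True | Some h' \<Rightarrow> h' < b)"

definition ge_opt :: "nat \<Rightarrow> nat option \<Rightarrow> bool" where
  "ge_opt b h = (case h of None \<Rightarrow> True | Some h' \<Rightarrow> h' \<le> b)"

definition choosable :: "'a \<Rightarrow> ('a, 'v) lstate \<Rightarrow> 'a set \<Rightarrow> nat \<Rightarrow> 'v \<Rightarrow> bool" where
  "choosable x s Q b v \<longleftrightarrow>
     (\<forall>q\<in>Q. \<forall>w. Msg q x K1b b w \<in> rcvd s \<longrightarrow> w = None) \<or>
     (\<exists>q\<in>Q. \<exists>n. Msg q x K1b b (Some (n, v)) \<in> rcvd s \<and>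
        (\<forall>q'\<in>Q. \<forall>n' v'. Msg q' x K1b b (Some (n', v')) \<in> rcvd s \<longrightarrow> n' \<le> n))"

definition process :: "'a set \<Rightarrow> 'a \<Rightarrow> ('a, 'v) msg \<Rightarrow> ('a, 'v) lstate \<Rightarrow> ('a, 'v) lstate" where
  "process Acc x m s =
     (let s1 = s\<lparr>rcvd := insert m (rcvd s)\<rparr> in
      if x \<in> Acc \<and> knd m = K1a \<and> gt_opt (num m) (hi s) then
        s1\<lparr>hi := Some (num m),
           out := insert (Msg x (src m) K1b (num m) (acc s)) (out s)\<rparr>
      else if x \<in> Acc \<and> knd m = K2a \<and> ge_opt (num m) (hi s) then
        s1\<lparr>hi := Some (num m), acc := val m,
           out := insert (Msg x (src m) K2b (num m) (val m)) (out s)\<rparr>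
      else s1)"

definition dictates :: "'a set \<Rightarrow> 'a set \<Rightarrow> ('a, 'v) config \<Rightarrow> 'a \<Rightarrow> ('a, 'v) msg \<Rightarrow> bool" where
  "dictates Prop Acc \<kappa> x m \<longleftrightarrow>
     (x \<in> Acc \<and> m \<in> out (st \<kappa> x)) \<or>
     (x \<in> Prop \<and> (\<exists>Q b v q0. quorum Acc Q \<and> q0 \<in> Q \<and>
         (\<forall>q\<in>Q. \<exists>w. Msg q x K1b b w \<in> rcvd (st \<kappa> x)) \<and>
         (q0, b) \<notin> sent2a (st \<kappa> x) \<and> choosable x (st \<kappa> x) Q b v \<and>
         m = Msg x q0 K2a b (Some (b, v))))"

definition after_send :: "'a set \<Rightarrow> ('a, 'v) config \<Rightarrow> 'a \<Rightarrow> ('a, 'v) msg \<Rightarrow> ('a, 'v) config" where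
  "after_send Acc \<kappa> x m =
     \<kappa>\<lparr>mu := mu \<kappa> + {#m#},
       st := (st \<kappa>)(x := (if x \<in> Acc then (st \<kappa> x)\<lparr>out := out (st \<kappa> x) - {m}\<rparr>
                            else (st \<kappa> x)\<lparr>sent2a := insert (dst m, num m) (sent2a (st \<kappa> x))\<rparr>))\<rparr>"

fun step :: "'a set \<Rightarrow> 'a set \<Rightarrow> ('a, 'v) config \<Rightarrow> ('a, 'v) label \<Rightarrow> ('a, 'v) config \<Rightarrow> bool" where
  "step Prop Acc \<kappa> (Snd x m) \<kappa>' \<longleftrightarrow> x \<in> avail \<kappa> \<and>
     ((x \<in> Prop \<and> knd m = K1a \<and> src m = x \<and> dst m \<in> Acc \<and> val m = None \<and>
       \<kappa>' = \<kappa>\<lparr>mu := mu \<kappa> + {#m#}\<rparr>) \<or>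
      (dictates Prop Acc \<kappa> x m \<and> \<kappa>' = after_send Acc \<kappa> x m))"
| "step Prop Acc \<kappa> (Rcv x m) \<kappa>' \<longleftrightarrow> x \<in> avail \<kappa> \<and> m \<in># mu \<kappa> \<and> dst m = x \<and>
     \<kappa>' = \<kappa>\<lparr>mu := mu \<kappa> - {#m#}, st := (st \<kappa>)(x := process Acc x m (st \<kappa> x))\<rparr>"
| "step Prop Acc \<kappa> (Stp x) \<kappa>' \<longleftrightarrow> x \<in> avail \<kappa> \<and> \<kappa>' = \<kappa>\<lparr>avail := avail \<kappa> - {x}\<rparr>"
| "step Prop Acc \<kappa> (Bgn x) \<kappa>' \<longleftrightarrow> x \<notin> avail \<kappa> \<and> \<kappa>' = \<kappa>\<lparr>avail := insert x (avail \<kappa>)\<rparr>"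

definition initial :: "('a, 'v) config \<Rightarrow> bool" where
  "initial \<kappa> \<longleftrightarrow> (\<forall>x. st \<kappa> x = empty_lstate) \<and> mu \<kappa> = {#}"

definition transition_path :: "'a set \<Rightarrow> 'a set \<Rightarrow> (nat \<Rightarrow> ('a, 'v) config) \<Rightarrow> (nat \<Rightarrow> ('a, 'v) label) \<Rightarrow> bool" where
  "transition_path Prop Acc T L \<longleftrightarrow> initial (T 0) \<and> (\<forall>n. step Prop Acc (T n) (L n) (T (Suc n)))"

definition snd_enabled :: "'a set \<Rightarrow> 'a set \<Rightarrow> ('a, 'v) config \<Rightarrow> 'a \<Rightarrow> ('a, 'v) msg \<Rightarrow> bool" where
  "snd_enabled Prop Acc \<kappa> x m \<longleftrightarrow> x \<in> avail \<kappa> \<and> dictates Prop Acc \<kappa> x m"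

definition rcv_enabled :: "('a, 'v) config \<Rightarrow> 'a \<Rightarrow> ('a, 'v) msg \<Rightarrow> bool" where
  "rcv_enabled \<kappa> x m \<longleftrightarrow> x \<in> avail \<kappa> \<and> m \<in># mu \<kappa> \<and> dst m = x"

definition fair_transition_path :: "'a set \<Rightarrow> 'a set \<Rightarrow> (nat \<Rightarrow> ('a, 'v) config) \<Rightarrow> (nat \<Rightarrow> ('a, 'v) label) \<Rightarrow> bool" where
  "fair_transition_path Prop Acc T L \<longleftrightarrow> transition_path Prop Acc T L \<and>
     (\<forall>i x m. snd_enabled Prop Acc (T i) x m \<longrightarrow>
        (\<exists>k\<ge>i. L k = Snd x m) \<or> (\<exists>k\<ge>i. \<forall>n\<ge>k. \<not> snd_enabled Prop Acc (T n) x m)) \<and>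
     (\<forall>i x m. rcv_enabled (T i) x m \<longrightarrow>
        (\<exists>k\<ge>i. L k = Rcv x m) \<or> (\<exists>k\<ge>i. \<forall>n\<ge>k. \<not> rcv_enabled (T n) x m))"

definition nonfaulty :: "'a set \<Rightarrow> 'a set \<Rightarrow> (nat \<Rightarrow> ('a, 'v) config) \<Rightarrow> (nat \<Rightarrow> ('a, 'v) label) \<Rightarrow> 'a \<Rightarrow> bool" where
  "nonfaulty Prop Acc T L x \<longleftrightarrow>
     (\<forall>i m. m \<in># mu (T i) \<and> dst m = x \<longrightarrow> (\<exists>j\<ge>i. x \<in> avail (T j))) \<and>
     (\<forall>i m. dictates Prop Acc (T i) x m \<longrightarrow> (\<exists>j\<ge>i. x \<in> avail (T j))) \<and>
     (\<forall>i m. snd_enabled Prop Acc (T i) x m \<longrightarrow>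
        (\<exists>k\<ge>i. L k = Snd x m) \<or> (\<forall>n. \<exists>k\<ge>n. snd_enabled Prop Acc (T k) x m)) \<and>
     (\<forall>i m. rcv_enabled (T i) x m \<longrightarrow>
        (\<exists>k\<ge>i. L k = Rcv x m) \<or> (\<forall>n. \<exists>k\<ge>n. rcv_enabled (T k) x m))"

definition P1_P2 :: "'a set \<Rightarrow> (nat \<Rightarrow> ('a, 'v) config) \<Rightarrow> (nat \<Rightarrow> ('a, 'v) label) \<Rightarrow> nat \<Rightarrow> bool" where
  "P1_P2 Acc T L b \<longleftrightarrow>
     (\<forall>n a m. a \<in> Acc \<and> L n = Rcv a m \<and> num m = b \<longrightarrow>
        (knd m = K1a \<longrightarrow> (\<forall>m'\<in>rcvd (st (T n) a). num m' < b)) \<and>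
        (knd m = K2a \<longrightarrow> (\<forall>m'\<in>rcvd (st (T n) a). num m' \<le> b)))"

definition received_from_all :: "('a, 'v) config \<Rightarrow> 'a \<Rightarrow> kind \<Rightarrow> nat \<Rightarrow> 'a set \<Rightarrow> bool" where
  "received_from_all \<kappa> p k b Q \<longleftrightarrow> (\<forall>q\<in>Q. \<exists>w. Msg q p k b w \<in> rcvd (st \<kappa> p))"

end

theory Submission
  imports Defs
begin

lemma rcvd_process[simp]: "rcvd (process Acc x m s) = insert m (rcvd s)"
  by (simp add: process_def Let_def)
lemma out_process: "out s \<subseteq> out (process Acc x m s)"
  by (auto simp: process_def Let_def)
lemma sent2a_process[simp]: "sent2a (process Acc x m s) = sent2a s"
  by (simp add: process_def Let_def)
lemma hi_process: "hi (process Acc x m s) = hi s \<or> hi (process Acc x m s) = Some (num m)"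
  by (simp add: process_def Let_def)
lemma out_process_K1b: "m' \<in> out (process Acc x m s) \<Longrightarrow> knd m' = K1b \<Longrightarrow>
   m' \<in> out s \<or> (x \<in> Acc \<and> knd m = K1a \<and> m' = Msg x (src m) K1b (num m) (acc s))"
  by (auto simp: process_def Let_def split: if_splits)
lemma process_2a: "x \<in> Acc \<Longrightarrow> knd m = K2a \<Longrightarrow> ge_opt (num m) (hi s) \<Longrightarrow>
   Msg x (src m) K2b (num m) (val m) \<in> out (process Acc x m s)"
  by (auto simp: process_def Let_def)

locale sp =
  fixes Prop Acc :: "'a set" and T :: "nat \<Rightarrow> ('a, 'v) config" and L :: "nat \<Rightarrow> ('a, 'v) label"
  assumes disj: "Prop \<inter> Acc = {}" and univ: "Prop \<union> Acc = UNIV"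
    and path: "transition_path Prop Acc T L"
begin

lemma stepn: "step Prop Acc (T n) (L n) (T (Suc n))"
  using path unfolding transition_path_def by blast

lemma st_cases:
  "st (T (Suc n)) x = st (T n) x \<or>
   (\<exists>m. L n = Rcv x m \<and> m \<in># mu (T n) \<and> dst m = x \<and> st (T (Suc n)) x = process Acc x m (st (T n) x)) \<or>
   (\<exists>m. L n = Snd x m \<and> dictates Prop Acc (T n) x m \<and>
      st (T (Suc n)) x = (if x \<in> Acc then (st (T n) x)\<lparr>out := out (st (T n) x) - {m}\<rparr>
                            else (st (T n) x)\<lparr>sent2a := insert (dst m, num m) (sent2a (st (T n) x))\<rparr>))"
  using stepn[of n] by (cases "L n") (auto simp: after_send_def split: if_splits)

lemma mu_cases:
  "mu (T (Suc n)) = mu (T n) \<or>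
   (\<exists>x m. L n = Snd x m \<and> mu (T (Suc n)) = mu (T n) + {#m#} \<and>
       ((knd m = K1a \<and> x \<in> Prop) \<or> dictates Prop Acc (T n) x m)) \<or>
   (\<exists>x m. L n = Rcv x m \<and> mu (T (Suc n)) = mu (T n) - {#m#} \<and> dst m = x)"
  using stepn[of n] by (cases "L n") (auto simp: after_send_def split: if_splits)

lemma rcvd_mono1: "rcvd (st (T n) x) \<subseteq> rcvd (st (T (Suc n)) x)"
  using st_cases[of n x] by auto

lemma rcvd_mono: "n \<le> n' \<Longrightarrow> rcvd (st (T n) x) \<subseteq> rcvd (st (T n') x)"
  using lift_Suc_mono_le[of "\<lambda>n. rcvd (st (T n) x)"] rcvd_mono1 by blast

lemma rcvd_finite: "finite (rcvd (st (T n) x))"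
proof (induction n)
  case 0
  then show ?case using path by (simp add: transition_path_def initial_def empty_lstate_def)
next
  case (Suc n)
  then show ?case using st_cases[of n x] by auto
qed

lemma snd_mu: "L k = Snd x m \<Longrightarrow> m \<in># mu (T (Suc k))"
  using stepn[of k] by (auto simp: after_send_def)

lemma rcv_rcvd: "L k = Rcv x m \<Longrightarrow> m \<in> rcvd (st (T (Suc k)) x) \<and> dst m = x
   \<and> st (T (Suc k)) x = process Acc x m (st (T k) x)"
  using stepn[of k] by auto


lemma mu_persist: "m \<in># mu (T k) \<Longrightarrow> k \<le> n \<Longrightarrow>
   m \<in># mu (T n) \<or> (\<exists>k'. k \<le> k' \<and> k' < n \<and> L k' = Rcv (dst m) m)"
proof (induction n)
  case 0 then show ?case by simp
next
  case (Suc n)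
  show ?case
  proof (cases "k = Suc n")
    case True then show ?thesis using Suc by simp
  next
    case False
    then have "k \<le> n" using Suc by simp
    with Suc.IH Suc.prems have "m \<in># mu (T n) \<or> (\<exists>k'. k \<le> k' \<and> k' < n \<and> L k' = Rcv (dst m) m)" by blast
    then show ?thesis
    proof
      assume a: "m \<in># mu (T n)"
      show ?thesis using mu_cases[of n]
      proof (elim disjE exE conjE)
        assume "mu (T (Suc n)) = mu (T n)" then show ?thesis using a by simp
      next
        fix x m' assume "mu (T (Suc n)) = mu (T n) + {#m'#}" then show ?thesis using a by simp
      next
        fix x m' assume "mu (T (Suc n)) = mu (T n) + {#m'#}" then show ?thesis using a by simp
      next
        fix x m' assume h: "L n = Rcv x m'" "mu (T (Suc n)) = mu (T n) - {#m'#}" "dst m' = x"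
        show ?thesis
        proof (cases "m = m'")
          case True then show ?thesis using h \<open>k \<le> n\<close> by auto
        next
          case False then have "m \<in># mu (T n) - {#m'#}" using a by (simp add: in_diff_count)
          then show ?thesis using h by simp
        qed
      qed
    next
      assume "\<exists>k'. k \<le> k' \<and> k' < n \<and> L k' = Rcv (dst m) m"
      then show ?thesis by (meson less_SucI)
    qed
  qed
qed

lemma out_persist: "x \<in> Acc \<Longrightarrow> m \<in> out (st (T k) x) \<Longrightarrow> k \<le> n \<Longrightarrow>
   m \<in> out (st (T n) x) \<or> (\<exists>k'. k \<le> k' \<and> k' < n \<and> L k' = Snd x m)"
proof (induction n)
  case 0 then show ?case by simp
next
  case (Suc n)
  show ?case
  proof (cases "k = Suc n")
    case True then show ?thesis using Suc by simp
  next
    case False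
    then have "k \<le> n" using Suc by simp
    with Suc.IH Suc.prems have "m \<in> out (st (T n) x) \<or> (\<exists>k'. k \<le> k' \<and> k' < n \<and> L k' = Snd x m)" by blast
    then show ?thesis
    proof
      assume a: "m \<in> out (st (T n) x)"
      show ?thesis using st_cases[of n x]
      proof (elim disjE exE conjE)
        assume "st (T (Suc n)) x = st (T n) x" then show ?thesis using a by simp
      next
        fix m' assume "st (T (Suc n)) x = process Acc x m' (st (T n) x)" then show ?thesis using a out_process by (metis subsetD)
      next
        fix m' assume h: "L n = Snd x m'" "st (T (Suc n)) x = (if x \<in> Acc then (st (T n) x)\<lparr>out := out (st (T n) x) - {m'}\<rparr>
                            else (st (T n) x)\<lparr>sent2a := insert (dst m', num m') (sent2a (st (T n) x))\<rparr>)"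
        show ?thesis
        proof (cases "m = m'")
          case True then show ?thesis using h \<open>k \<le> n\<close> by auto
        next
          case False then show ?thesis using h a Suc.prems by simp
        qed
      qed
    next
      assume "\<exists>k'. k \<le> k' \<and> k' < n \<and> L k' = Snd x m"
      then show ?thesis by (meson less_SucI)
    qed
  qed
qed

definition orig :: "nat \<Rightarrow> 'a \<Rightarrow> 'a \<Rightarrow> nat \<Rightarrow> (nat \<times> 'v) option \<Rightarrow> bool" where
  "orig n a y c w \<longleftrightarrow> (\<exists>k<n. \<exists>m. L k = Rcv a m \<and> knd m = K1a \<and> num m = c \<and> src m = y \<and> w = acc (st (T k) a))"

definition inv1 :: "nat \<Rightarrow> bool" where
  "inv1 n \<longleftrightarrow> (\<forall>x m. (m \<in> out (st (T n) x) \<or> m \<in> rcvd (st (T n) x) \<or> m \<in># mu (T n)) \<longrightarrow> knd m = K1b \<longrightarrow>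
      src m \<in> Acc \<and> orig n (src m) (dst m) (num m) (val m))"

lemma orig_Suc: "orig n a y c w \<Longrightarrow> orig (Suc n) a y c w"
  unfolding orig_def using less_SucI by blast

lemma inv1_all: "inv1 n"
proof (induction n)
  case 0 then show ?case using path
    by (simp add: inv1_def transition_path_def initial_def empty_lstate_def)
next
  case (Suc n)
  have IH: "(m \<in> out (st (T n) x) \<or> m \<in> rcvd (st (T n) x) \<or> m \<in># mu (T n)) \<Longrightarrow> knd m = K1b \<Longrightarrow>
      src m \<in> Acc \<and> orig (Suc n) (src m) (dst m) (num m) (val m)" for x m
    using Suc.IH orig_Suc unfolding inv1_def by blast
  show ?case unfolding inv1_def
  proof (intro allI impI)
    fix x m
    assume k: "knd m = K1b" and
      h: "m \<in> out (st (T (Suc n)) x) \<or> m \<in> rcvd (st (T (Suc n)) x) \<or> m \<in># mu (T (Suc n))"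
    from h show "src m \<in> Acc \<and> orig (Suc n) (src m) (dst m) (num m) (val m)"
    proof (elim disjE)
      assume o: "m \<in> out (st (T (Suc n)) x)"
      show ?thesis using st_cases[of n x]
      proof (elim disjE exE conjE)
        assume "st (T (Suc n)) x = st (T n) x" then show ?thesis using o k IH by auto
      next
        fix m' assume e: "L n = Rcv x m'" "st (T (Suc n)) x = process Acc x m' (st (T n) x)"
        then have "m \<in> out (st (T n) x) \<or> (x \<in> Acc \<and> knd m' = K1a \<and> m = Msg x (src m') K1b (num m') (acc (st (T n) x)))"
          using out_process_K1b o k by metis
        then show ?thesis
        proof
          assume "m \<in> out (st (T n) x)" then show ?thesis using IH k by blast
        next
          assume "x \<in> Acc \<and> knd m' = K1a \<and> m = Msg x (src m') K1b (num m') (acc (st (T n) x))"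
          then show ?thesis using e unfolding orig_def by auto
        qed
      next
        fix m' assume e: "st (T (Suc n)) x = (if x \<in> Acc then (st (T n) x)\<lparr>out := out (st (T n) x) - {m'}\<rparr>
                            else (st (T n) x)\<lparr>sent2a := insert (dst m', num m') (sent2a (st (T n) x))\<rparr>)"
        then have "m \<in> out (st (T n) x)" using o by (auto split: if_splits)
        then show ?thesis using IH k by blast
      qed
    next
      assume o: "m \<in> rcvd (st (T (Suc n)) x)"
      show ?thesis using st_cases[of n x]
      proof (elim disjE exE conjE)
        assume "st (T (Suc n)) x = st (T n) x" then show ?thesis using o k IH by auto
      next
        fix m' assume e: "m' \<in># mu (T n)" "st (T (Suc n)) x = process Acc x m' (st (T n) x)"
        then show ?thesis using o k IH by auto
      next
        fix m' assume e: "st (T (Suc n)) x = (if x \<in> Acc then (st (T n) x)\<lparr>out := out (st (T n) x) - {m'}\<rparr>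
                            else (st (T n) x)\<lparr>sent2a := insert (dst m', num m') (sent2a (st (T n) x))\<rparr>)"
        then have "m \<in> rcvd (st (T n) x)" using o by (auto split: if_splits)
        then show ?thesis using IH k by blast
      qed
    next
      assume o: "m \<in># mu (T (Suc n))"
      show ?thesis using mu_cases[of n]
      proof (elim disjE exE conjE)
        assume "mu (T (Suc n)) = mu (T n)" then show ?thesis using o k IH by auto
      next
        fix y m' assume "mu (T (Suc n)) = mu (T n) + {#m'#}" "knd m' = K1a"
        then show ?thesis using o k IH by auto
      next
        fix y m' assume e: "mu (T (Suc n)) = mu (T n) + {#m'#}" "dictates Prop Acc (T n) y m'"
        show ?thesis
        proof (cases "m = m'")
          case False then show ?thesis using o e k IH by auto
        next
          case True
          then have "m \<in> out (st (T n) y)" using e(2) k unfolding dictates_def by auto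
          then show ?thesis using IH k by blast
        qed
      next
        fix y m' assume "mu (T (Suc n)) = mu (T n) - {#m'#}"
        then show ?thesis using o k IH by (metis in_diffD)
      qed
    qed
  qed
qed


lemma orig_unique:
  assumes P: "P1_P2 Acc T L c" and a: "a \<in> Acc"
    and o1: "orig n a y c w" and o2: "orig n' a y' c w'"
  shows "y = y' \<and> w = w'"
proof -
  obtain k m where k: "L k = Rcv a m" "knd m = K1a" "num m = c" "src m = y" "w = acc (st (T k) a)"
    using o1 unfolding orig_def by blast
  obtain k' m' where k': "L k' = Rcv a m'" "knd m' = K1a" "num m' = c" "src m' = y'" "w' = acc (st (T k') a)"
    using o2 unfolding orig_def by blast
  have no: False if "L k1 = Rcv a m1" "knd m1 = K1a" "num m1 = c" "L k2 = Rcv a m2" "knd m2 = K1a" "num m2 = c"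
      "k1 < k2" for k1 k2 m1 m2
  proof -
    have "m1 \<in> rcvd (st (T (Suc k1)) a)" using rcv_rcvd[OF that(1)] by blast
    then have "m1 \<in> rcvd (st (T k2) a)" using rcvd_mono[of "Suc k1" k2 a] that(7) by auto
    moreover have "\<forall>m''\<in>rcvd (st (T k2) a). num m'' < c"
      using P a that(4,5,6) unfolding P1_P2_def by blast
    ultimately show False using that(3) by auto
  qed
  have "k = k'"
  proof (rule ccontr)
    assume "k \<noteq> k'"
    then have "k < k' \<or> k' < k" by arith
    then show False using no k k' by metis
  qed
  then show ?thesis using k k' by simp
qed

definition inv_hi :: "nat \<Rightarrow> bool" where
  "inv_hi n \<longleftrightarrow> (\<forall>x h. hi (st (T n) x) = Some h \<longrightarrow> (\<exists>m\<in>rcvd (st (T n) x). num m = h))"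

lemma inv_hi_all: "inv_hi n"
proof (induction n)
  case 0 then show ?case using path
    by (simp add: inv_hi_def transition_path_def initial_def empty_lstate_def)
next
  case (Suc n)
  show ?case unfolding inv_hi_def
  proof (intro allI impI)
    fix x h assume h: "hi (st (T (Suc n)) x) = Some h"
    show "\<exists>m\<in>rcvd (st (T (Suc n)) x). num m = h" using st_cases[of n x]
    proof (elim disjE exE conjE)
      assume "st (T (Suc n)) x = st (T n) x" then show ?thesis using h Suc.IH unfolding inv_hi_def by auto
    next
      fix m' assume e: "st (T (Suc n)) x = process Acc x m' (st (T n) x)"
      show ?thesis using hi_process[of Acc x m' "st (T n) x"]
      proof
        assume "hi (process Acc x m' (st (T n) x)) = hi (st (T n) x)"
        then show ?thesis using h e Suc.IH unfolding inv_hi_def by auto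
      next
        assume "hi (process Acc x m' (st (T n) x)) = Some (num m')"
        then show ?thesis using h e by auto
      qed
    next
      fix m' assume e: "st (T (Suc n)) x = (if x \<in> Acc then (st (T n) x)\<lparr>out := out (st (T n) x) - {m'}\<rparr>
                            else (st (T n) x)\<lparr>sent2a := insert (dst m', num m') (sent2a (st (T n) x))\<rparr>)"
      then show ?thesis using h Suc.IH unfolding inv_hi_def by (auto split: if_splits)
    qed
  qed
qed

definition inv_s2 :: "nat \<Rightarrow> bool" where
  "inv_s2 n \<longleftrightarrow> (\<forall>x a c. (a, c) \<in> sent2a (st (T n) x) \<longrightarrow> (\<exists>k<n. \<exists>w. L k = Snd x (Msg x a K2a c w)))"

lemma inv_s2_all: "inv_s2 n"
proof (induction n)
  case 0 then show ?case using path
    by (simp add: inv_s2_def transition_path_def initial_def empty_lstate_def)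
next
  case (Suc n)
  have IH: "(a, c) \<in> sent2a (st (T n) x) \<Longrightarrow> (\<exists>k<Suc n. \<exists>w. L k = Snd x (Msg x a K2a c w))" for x a c
    using Suc.IH unfolding inv_s2_def using less_SucI by blast
  show ?case unfolding inv_s2_def
  proof (intro allI impI)
    fix x a c assume h: "(a, c) \<in> sent2a (st (T (Suc n)) x)"
    show "\<exists>k<Suc n. \<exists>w. L k = Snd x (Msg x a K2a c w)" using st_cases[of n x]
    proof (elim disjE exE conjE)
      assume "st (T (Suc n)) x = st (T n) x" then show ?thesis using h IH by auto
    next
      fix m' assume e: "st (T (Suc n)) x = process Acc x m' (st (T n) x)"
      then show ?thesis using h IH by auto
    next
      fix m' assume e: "L n = Snd x m'" "dictates Prop Acc (T n) x m'"
        "st (T (Suc n)) x = (if x \<in> Acc then (st (T n) x)\<lparr>out := out (st (T n) x) - {m'}\<rparr>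
                            else (st (T n) x)\<lparr>sent2a := insert (dst m', num m') (sent2a (st (T n) x))\<rparr>)"
      show ?thesis
      proof (cases "x \<in> Acc")
        case True then show ?thesis using e h IH by auto
      next
        case False
        then have hh: "(a, c) \<in> sent2a (st (T n) x) \<or> (a, c) = (dst m', num m')" using e h by auto
        show ?thesis
        proof (cases "(a, c) \<in> sent2a (st (T n) x)")
          case True then show ?thesis using IH by blast
        next
          case F2: False
          then have ac: "a = dst m'" "c = num m'" using hh by auto
          from e(2) False obtain q0 bb v where "m' = Msg x q0 K2a bb (Some (bb, v))"
            unfolding dictates_def by blast
          then show ?thesis using ac e(1) by auto
        qed
      qed
    qed
  qed
qed

lemma ev_snd:
  assumes F: "fair_transition_path Prop Acc T L" and N: "nonfaulty Prop Acc T L x"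
    and E: "snd_enabled Prop Acc (T j) x m"
  shows "\<exists>k\<ge>j. L k = Snd x m"
proof -
  from N E have "(\<exists>k\<ge>j. L k = Snd x m) \<or> (\<forall>n. \<exists>k\<ge>n. snd_enabled Prop Acc (T k) x m)"
    unfolding nonfaulty_def by blast
  moreover from F E have "(\<exists>k\<ge>j. L k = Snd x m) \<or> (\<exists>k\<ge>j. \<forall>n\<ge>k. \<not> snd_enabled Prop Acc (T n) x m)"
    unfolding fair_transition_path_def by blast
  ultimately show ?thesis by blast
qed

lemma ev_rcv:
  assumes F: "fair_transition_path Prop Acc T L" and N: "nonfaulty Prop Acc T L x"
    and E: "rcv_enabled (T j) x m"
  shows "\<exists>k\<ge>j. L k = Rcv x m"
proof -
  from N E have "(\<exists>k\<ge>j. L k = Rcv x m) \<or> (\<forall>n. \<exists>k\<ge>n. rcv_enabled (T k) x m)"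
    unfolding nonfaulty_def by blast
  moreover from F E have "(\<exists>k\<ge>j. L k = Rcv x m) \<or> (\<exists>k\<ge>j. \<forall>n\<ge>k. \<not> rcv_enabled (T n) x m)"
    unfolding fair_transition_path_def by blast
  ultimately show ?thesis by blast
qed

lemma ev_rcv_mu:
  assumes F: "fair_transition_path Prop Acc T L" and N: "nonfaulty Prop Acc T L x"
    and M: "m \<in># mu (T k)" and D: "dst m = x"
  shows "\<exists>k'\<ge>k. L k' = Rcv x m"
proof -
  obtain j where j: "j \<ge> k" "x \<in> avail (T j)" using N M D unfolding nonfaulty_def by blast
  from mu_persist[OF M j(1)] show ?thesis
  proof
    assume "m \<in># mu (T j)"
    then have "rcv_enabled (T j) x m" using j D by (simp add: rcv_enabled_def)
    then show ?thesis using ev_rcv[OF F N] j(1) by (meson order_trans)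
  next
    assume "\<exists>k'. k \<le> k' \<and> k' < j \<and> L k' = Rcv (dst m) m"
    then show ?thesis using D by blast
  qed
qed

lemma ev_snd_out:
  assumes F: "fair_transition_path Prop Acc T L" and N: "nonfaulty Prop Acc T L x"
    and A: "x \<in> Acc" and M: "m \<in> out (st (T k) x)"
  shows "\<exists>k'\<ge>k. L k' = Snd x m"
proof -
  have "dictates Prop Acc (T k) x m" using A M by (simp add: dictates_def)
  then obtain j where j: "j \<ge> k" "x \<in> avail (T j)" using N unfolding nonfaulty_def by blast
  from out_persist[OF A M j(1)] show ?thesis
  proof
    assume "m \<in> out (st (T j) x)"
    then have "snd_enabled Prop Acc (T j) x m" using j A by (simp add: snd_enabled_def dictates_def)
    then show ?thesis using ev_snd[OF F N] j(1) by (meson order_trans)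
  next
    assume "\<exists>k'. k \<le> k' \<and> k' < j \<and> L k' = Snd x m"
    then show ?thesis by blast
  qed
qed


lemma from_2a:
  assumes F: "fair_transition_path Prop Acc T L" and q: "q \<in> Acc"
    and Nq: "nonfaulty Prop Acc T L q" and Np: "nonfaulty Prop Acc T L p"
    and P: "P1_P2 Acc T L b" and Lk: "L k = Rcv q (Msg p q K2a b w)"
  shows "\<exists>j w'. Msg q p K2b b w' \<in> rcvd (st (T j) p)"
proof -
  let ?m = "Msg p q K2a b w"
  have S: "st (T (Suc k)) q = process Acc q ?m (st (T k) q)" using rcv_rcvd[OF Lk] by blast
  have G: "ge_opt b (hi (st (T k) q))"
  proof (cases "hi (st (T k) q)")
    case None then show ?thesis by (simp add: ge_opt_def)
  next
    case (Some h)
    then obtain m' where m': "m' \<in> rcvd (st (T k) q)" "num m' = h"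
      using inv_hi_all[of k] unfolding inv_hi_def by blast
    have "\<forall>m'\<in>rcvd (st (T k) q). num m' \<le> b" using P q Lk unfolding P1_P2_def by fastforce
    then show ?thesis using m' Some by (auto simp: ge_opt_def)
  qed
  have "Msg q p K2b b w \<in> out (st (T (Suc k)) q)"
    using process_2a[of q Acc ?m "st (T k) q"] q G S by simp
  then obtain k' where k': "L k' = Snd q (Msg q p K2b b w)"
    using ev_snd_out[OF F Nq q] by blast
  then have "Msg q p K2b b w \<in># mu (T (Suc k'))" by (rule snd_mu)
  then obtain k'' where "L k'' = Rcv p (Msg q p K2b b w)"
    using ev_rcv_mu[OF F Np] by fastforce
  then show ?thesis using rcv_rcvd by blast
qed

lemma choosable_ex: "finite (rcvd s) \<Longrightarrow> \<exists>v. choosable x s Q b v"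
proof (cases "\<forall>q\<in>Q. \<forall>w. Msg q x K1b b w \<in> rcvd s \<longrightarrow> w = None")
  case True then show ?thesis by (auto simp: choosable_def)
next
  case False
  assume fin: "finite (rcvd s)"
  let ?N = "{n. \<exists>q\<in>Q. \<exists>v. Msg q x K1b b (Some (n, v)) \<in> rcvd s}"
  have "?N \<subseteq> (\<lambda>m. fst (the (val m))) ` rcvd s" by force
  then have finN: "finite ?N" using fin finite_subset by blast
  from False have ne: "?N \<noteq> {}" by auto
  have "Max ?N \<in> ?N" using finN ne by (rule Max_in)
  then obtain q v where qv: "q \<in> Q" "Msg q x K1b b (Some (Max ?N, v)) \<in> rcvd s" by blast
  have "\<forall>q'\<in>Q. \<forall>n' v'. Msg q' x K1b b (Some (n', v')) \<in> rcvd s \<longrightarrow> n' \<le> Max ?N"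
    using finN by (auto intro: Max_ge)
  then have "choosable x s Q b v" unfolding choosable_def using qv by blast
  then show ?thesis by blast
qed

lemma choosable_cong: "(\<And>q w. q \<in> Q \<Longrightarrow> (Msg q x K1b b w \<in> rcvd s) = (Msg q x K1b b w \<in> rcvd s')) \<Longrightarrow>
  choosable x s Q b v = choosable x s' Q b v"
  unfolding choosable_def by (intro arg_cong2[where f="(\<or>)"]) (auto cong: conj_cong)

lemma get_2a:
  assumes F: "fair_transition_path Prop Acc T L" and p: "p \<in> Prop"
    and Np: "nonfaulty Prop Acc T L p" and Qq: "quorum Acc Q" and q: "q \<in> Q"
    and P: "P1_P2 Acc T L b" and R: "received_from_all (T i) p K1b b Q"
  shows "\<exists>k w. L k = Snd p (Msg p q K2a b w)"
proof (rule ccontr)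
  assume nk: "\<not> (\<exists>k w. L k = Snd p (Msg p q K2a b w))"
  have ns: "(q, b) \<notin> sent2a (st (T n) p)" for n
    using inv_s2_all[of n] nk unfolding inv_s2_def by blast
  obtain v0 where v0: "choosable p (st (T i) p) Q b v0" using choosable_ex[OF rcvd_finite[of i p]] by blast
  have QA: "Q \<subseteq> Acc" using Qq by (simp add: quorum_def)
  have stab: "(Msg q' p K1b b w \<in> rcvd (st (T n) p)) = (Msg q' p K1b b w \<in> rcvd (st (T i) p))"
    if n: "n \<ge> i" and q': "q' \<in> Q" for n q' w
  proof
    assume "Msg q' p K1b b w \<in> rcvd (st (T i) p)"
    then show "Msg q' p K1b b w \<in> rcvd (st (T n) p)" using rcvd_mono[OF n] by blast
  next
    assume a: "Msg q' p K1b b w \<in> rcvd (st (T n) p)"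
    obtain w0 where w0: "Msg q' p K1b b w0 \<in> rcvd (st (T i) p)" using R q' unfolding received_from_all_def by blast
    have o1: "orig n q' p b w" using inv1_all[of n] a unfolding inv1_def by fastforce
    have o2: "orig i q' p b w0" using inv1_all[of i] w0 unfolding inv1_def by fastforce
    have "w = w0" using orig_unique[OF P _ o1 o2] q' QA by blast
    then show "Msg q' p K1b b w \<in> rcvd (st (T i) p)" using w0 by simp
  qed
  let ?m0 = "Msg p q K2a b (Some (b, v0))"
  have D: "dictates Prop Acc (T n) p ?m0" if n: "n \<ge> i" for n
  proof -
    have "choosable p (st (T n) p) Q b v0"
      using v0 choosable_cong[of Q p b "st (T n) p" "st (T i) p" v0] stab[OF n] by blast
    moreover have "\<forall>q'\<in>Q. \<exists>w. Msg q' p K1b b w \<in> rcvd (st (T n) p)"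
      using R stab[OF n] unfolding received_from_all_def by blast
    ultimately show ?thesis unfolding dictates_def using p Qq q ns[of n] by blast
  qed
  obtain j where j: "j \<ge> i" "p \<in> avail (T j)" using Np D[of i] unfolding nonfaulty_def by blast
  have "snd_enabled Prop Acc (T j) p ?m0" using D[OF j(1)] j(2) by (simp add: snd_enabled_def)
  then obtain k where "L k = Snd p ?m0" using ev_snd[OF F Np] by blast
  then show False using nk by blast
qed

end

theorem lemma2:
  fixes Prop Acc :: "'a set" and T :: "nat \<Rightarrow> ('a, 'v) config"
    and L :: "nat \<Rightarrow> ('a, 'v) label" and p :: 'a and Q :: "'a set"
    and b :: nat and i :: nat
  assumes "Prop \<inter> Acc = {}" and "Prop \<union> Acc = UNIV"
    and "fair_transition_path Prop Acc T L"
    and "p \<in> Prop" and "nonfaulty Prop Acc T L p"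
    and "quorum Acc Q" and "\<forall>q\<in>Q. nonfaulty Prop Acc T L q"
    and "P1_P2 Acc T L b"
    and "received_from_all (T i) p K1b b Q"
  shows "\<exists>j. received_from_all (T j) p K2b b Q"
proof -
  interpret sp Prop Acc T L
    using assms(1,2,3) by unfold_locales (simp_all add: fair_transition_path_def)
  have QA: "Q \<subseteq> Acc" "Q \<noteq> {}" using assms(6) by (auto simp: quorum_def)
  have each: "\<exists>j w'. Msg q p K2b b w' \<in> rcvd (st (T j) p)" if q: "q \<in> Q" for q
  proof -
    obtain k w where k: "L k = Snd p (Msg p q K2a b w)"
      using get_2a[OF assms(3,4,5,6) q assms(8,9)] by blast
    have "Msg p q K2a b w \<in># mu (T (Suc k))" using snd_mu[OF k] .
    then obtain k' where "L k' = Rcv q (Msg p q K2a b w)"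
      using ev_rcv_mu[OF assms(3), of q] assms(7) q by fastforce
    then show ?thesis using from_2a[OF assms(3) _ _ assms(5,8)] q assms(7) QA by blast
  qed
  then obtain f where f: "\<And>q. q \<in> Q \<Longrightarrow> \<exists>w'. Msg q p K2b b w' \<in> rcvd (st (T (f q)) p)" by metis
  have "Q \<subseteq> src ` rcvd (st (T i) p)"
    using assms(9) unfolding received_from_all_def by force
  then have finQ: "finite Q" using rcvd_finite finite_surj by blast
  let ?J = "Max (f ` Q)"
  have "\<exists>w. Msg q p K2b b w \<in> rcvd (st (T ?J) p)" if q: "q \<in> Q" for q
  proof -
    have "f q \<le> ?J" using finQ q by simp
    then show ?thesis using f[OF q] rcvd_mono by blast
  qed
  then show ?thesis unfolding received_from_all_def by blast
qed

end
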